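(* For any integer $m\ge 1$ and all $z,\xi\in\mathbb{B}_N$, $$\big(|E_\xi+m|^2-\Delta_\xi\big)\cdots\big(|E_\xi+1|^2-\Delta_\xi\big)\big(|E_\xi|^2-\Delta_\xi\big)\Big\{\frac{1}{|1-\langle z,\xi\rangle|^2}\Big\}=|E_z|^2\Big\{\frac{(m!)^2(1-|z|^2)^{m+1}}{|1-\langle z,\xi\rangle|^{2(m+1)}}\Big\},$$ and $$\big(|E_\xi+m|^2-\Delta_\xi\big)\cdots\big(|E_\xi|^2-\Delta_\xi\big)\Big\{\frac{1-|\xi|^2}{|1-\langle z,\xi\rangle|^2}\Big\}=\big(|E_z|^2-\Delta_z\big)\Big\{\frac{(m!)^2(1-|z|^2)^{m+1}}{|1-\langle z,\xi\rangle|^{2(m+1)}}\Big\}.$$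
   Context: $\mathbb{B}_N$ is the unit ball of $\mathbb{C}^N$ and $\langle z,\xi\rangle=\sum_j z_j\bar\xi_j$. The operators are $E_z=\sum_{j=1}^N z_j\partial/\partial z_j$, $\bar E_z=\sum_{j=1}^N\bar z_j\partial/\partial\bar z_j$, $\Delta_z=\sum_{j=1}^N\partial^2/\partial z_j\partial\bar z_j$, and for a real number $s$, $|E_z+s|^2=(E_z+s)(\bar E_z+s)$; subscripts $\xi$ denote the same operators acting in the variable $\xi$. Products of operators denote composition. *)

theory Defs
  imports "HOL-Analysis.Analysis"
begin

text \<open>Points of C^N are vectors complex^'n (N = CARD('n)). Functions are complex valued.
 Real directional derivative via the Frechet derivative (C^N viewed as a real vector space).\<close>

definition dirD :: "(complex^'n \<Rightarrow> complex) \<Rightarrow> complex^'n \<Rightarrow> complex^'n \<Rightarrow> complex" where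
  "dirD f v z = frechet_derivative f (at z) v"

definition dz :: "'n \<Rightarrow> (complex^'n \<Rightarrow> complex) \<Rightarrow> complex^'n \<Rightarrow> complex" where
  "dz j f = (\<lambda>z. (dirD f (axis j 1) z - \<i> * dirD f (axis j \<i>) z) / 2)"

definition dzb :: "'n \<Rightarrow> (complex^'n \<Rightarrow> complex) \<Rightarrow> complex^'n \<Rightarrow> complex" where
  "dzb j f = (\<lambda>z. (dirD f (axis j 1) z + \<i> * dirD f (axis j \<i>) z) / 2)"

definition cinner :: "complex^'n \<Rightarrow> complex^'n \<Rightarrow> complex" where
  "cinner z w = (\<Sum>j\<in>UNIV. z $ j * cnj (w $ j))"

definition Eop :: "(complex^'n::finite \<Rightarrow> complex) \<Rightarrow> complex^'n \<Rightarrow> complex" where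
  "Eop f = (\<lambda>z. \<Sum>j\<in>UNIV. z $ j * dz j f z)"

definition Ebop :: "(complex^'n::finite \<Rightarrow> complex) \<Rightarrow> complex^'n \<Rightarrow> complex" where
  "Ebop f = (\<lambda>z. \<Sum>j\<in>UNIV. cnj (z $ j) * dzb j f z)"

definition Lapop :: "(complex^'n::finite \<Rightarrow> complex) \<Rightarrow> complex^'n \<Rightarrow> complex" where
  "Lapop f = (\<lambda>z. \<Sum>j\<in>UNIV. dz j (dzb j f) z)"

text \<open>|E+s|^2 = (E+s)(Ebar+s)\<close>
definition absE2 :: "real \<Rightarrow> (complex^'n::finite \<Rightarrow> complex) \<Rightarrow> complex^'n \<Rightarrow> complex" where
  "absE2 s f = (let g = (\<lambda>z. Ebop f z + of_real s * f z) in (\<lambda>z. Eop g z + of_real s * g z))"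

definition Lop :: "real \<Rightarrow> (complex^'n::finite \<Rightarrow> complex) \<Rightarrow> complex^'n \<Rightarrow> complex" where
  "Lop s f = (\<lambda>z. absE2 s f z - Lapop f z)"

text \<open>(|E+m|^2-Delta) ... (|E+1|^2-Delta)(|E|^2-Delta), composition, L_0 applied first.\<close>
primrec Lprod :: "nat \<Rightarrow> (complex^'n::finite \<Rightarrow> complex) \<Rightarrow> complex^'n \<Rightarrow> complex" where
  "Lprod 0 f = Lop 0 f"
| "Lprod (Suc k) f = Lop (real (Suc k)) (Lprod k f)"

end

theory Submission
  imports Defs
begin

lemma hd_nth: "((\<lambda>w::complex^'n. w $ j) has_derivative (\<lambda>h. h $ j)) F"
  by (rule bounded_linear.has_derivative[OF bounded_linear_vec_nth has_derivative_ident])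

lemma hd_cnj_nth: "((\<lambda>w::complex^'n. cnj (w $ j)) has_derivative (\<lambda>h. cnj (h $ j))) F"
  by (rule bounded_linear.has_derivative[OF bounded_linear_cnj hd_nth])

lemma hd_cinner1: "((\<lambda>w::complex^'n::finite. cinner w z) has_derivative (\<lambda>h. cinner h z)) F"
  unfolding cinner_def
  by (rule has_derivative_sum, rule has_derivative_mult_left[OF hd_nth])

lemma hd_cinner2: "((\<lambda>w::complex^'n::finite. cinner z w) has_derivative (\<lambda>h. cinner z h)) F"
  unfolding cinner_def
  by (rule has_derivative_sum, rule has_derivative_mult_right[OF hd_cnj_nth])

lemma hd_cinner3: "((\<lambda>w::complex^'n::finite. cinner w w) has_derivative (\<lambda>h. cinner h w + cinner w h)) (at w)"
  unfolding cinner_def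
  apply (rule has_derivative_eq_rhs)
   apply (rule has_derivative_sum, rule has_derivative_mult[OF hd_nth hd_cnj_nth])
  apply (auto simp: sum.distrib algebra_simps)
  done

definition cX :: "complex^'n::finite \<Rightarrow> complex^'n \<Rightarrow> complex" where
  "cX z w = 1 / (1 - cinner w z)"
definition cY :: "complex^'n::finite \<Rightarrow> complex^'n \<Rightarrow> complex" where
  "cY z w = 1 / (1 - cinner z w)"
definition TT :: "complex^'n::finite \<Rightarrow> complex^'n \<Rightarrow> complex \<times> complex \<times> complex" where
  "TT z w = (cX z w, cY z w, cinner w w)"

lemma hd_TT:
  assumes "cinner w z \<noteq> 1" "cinner z w \<noteq> 1"
  shows "(TT z has_derivative (\<lambda>h. (cX z w ^ 2 * cinner h z, cY z w ^ 2 * cinner z h,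
            cinner h w + cinner w h))) (at w)"
proof -
  have a: "1 - cinner w z \<noteq> 0" "1 - cinner z w \<noteq> 0" using assms by auto
  have 1: "((\<lambda>w. cX z w) has_derivative (\<lambda>h. cX z w ^ 2 * cinner h z)) (at w)"
    unfolding cX_def
    apply (rule has_derivative_eq_rhs)
     apply (rule has_derivative_divide[OF has_derivative_const has_derivative_diff[OF has_derivative_const hd_cinner1]])
    using a apply (auto simp: field_simps power2_eq_square)
    done
  have 2: "((\<lambda>w. cY z w) has_derivative (\<lambda>h. cY z w ^ 2 * cinner z h)) (at w)"
    unfolding cY_def
    apply (rule has_derivative_eq_rhs)
     apply (rule has_derivative_divide[OF has_derivative_const has_derivative_diff[OF has_derivative_const hd_cinner2]])
    using a apply (auto simp: field_simps power2_eq_square)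
    done
  show ?thesis unfolding TT_def
    by (rule has_derivative_Pair[OF 1 has_derivative_Pair[OF 2 hd_cinner3]])
qed

lemma dz_gen:
  assumes "open U" "w \<in> U" "\<And>x. x \<in> U \<Longrightarrow> f x = g x" "(g has_derivative g') (at w)"
  shows "dz j f w = (g' (axis j 1) - \<i> * g' (axis j \<i>)) / 2"
    and "dzb j f w = (g' (axis j 1) + \<i> * g' (axis j \<i>)) / 2"
proof -
  have "(f has_derivative g') (at w)"
    by (rule has_derivative_transform_within_open[OF assms(4) assms(1,2)]) (use assms(3) in auto)
  then have "frechet_derivative f (at w) = g'" using frechet_derivative_at by metis
  then show "dz j f w = (g' (axis j 1) - \<i> * g' (axis j \<i>)) / 2"
      "dzb j f w = (g' (axis j 1) + \<i> * g' (axis j \<i>)) / 2"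
    unfolding dz_def dzb_def dirD_def by auto
qed

lemma cinner_axis1: "cinner (axis j c) z = c * cnj (z $ j)"
proof -
  have "cinner (axis j c) z = (\<Sum>i\<in>UNIV. if i = j then c * cnj (z $ j) else 0)"
    unfolding cinner_def axis_def by (rule sum.cong) auto
  then show ?thesis by simp
qed
lemma cinner_axis2: "cinner z (axis j c) = z $ j * cnj c"
proof -
  have "cinner z (axis j c) = (\<Sum>i\<in>UNIV. if i = j then z $ j * cnj c else 0)"
    unfolding cinner_def axis_def by (rule sum.cong) auto
  then show ?thesis by simp
qed

lemma axis_nth_eq: "axis j c $ k = (if k = j then c else 0)"
  unfolding axis_def by simp

lemma dz_comp:
  fixes z :: "complex^'n::finite"
  assumes U: "open U" "w \<in> U" and good: "cinner w z \<noteq> 1" "cinner z w \<noteq> 1"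
  and f: "\<And>x. x \<in> U \<Longrightarrow> f x = \<Psi> (TT z x) + \<Theta> (TT z x) * x $ k"
  and dP: "(\<Psi> has_derivative (\<lambda>h. A * fst h + B * fst (snd h) + C * snd (snd h))) (at (TT z w))"
  and dT: "(\<Theta> has_derivative (\<lambda>h. A' * fst h + B' * fst (snd h) + C' * snd (snd h))) (at (TT z w))"
  shows "dz j f w = A * cX z w ^ 2 * cnj (z $ j) + C * cnj (w $ j)
          + (A' * cX z w ^ 2 * cnj (z $ j) + C' * cnj (w $ j)) * w $ k
          + (if j = k then \<Theta> (TT z w) else 0)"
    and "dzb j f w = B * cY z w ^ 2 * z $ j + C * w $ j
          + (B' * cY z w ^ 2 * z $ j + C' * w $ j) * w $ k"
proof -
  define L where "L = (\<lambda>h. (cX z w ^ 2 * cinner h z, cY z w ^ 2 * cinner z h, cinner h w + cinner w h))"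
  have dTT: "(TT z has_derivative L) (at w)" unfolding L_def by (rule hd_TT[OF good])
  have c1: "((\<lambda>x. \<Psi> (TT z x)) has_derivative (\<lambda>h. A * fst (L h) + B * fst (snd (L h)) + C * snd (snd (L h)))) (at w)"
    using diff_chain_at[OF dTT dP] by (simp add: o_def)
  have c2: "((\<lambda>x. \<Theta> (TT z x)) has_derivative (\<lambda>h. A' * fst (L h) + B' * fst (snd (L h)) + C' * snd (snd (L h)))) (at w)"
    using diff_chain_at[OF dTT dT] by (simp add: o_def)
  have g: "((\<lambda>x. \<Psi> (TT z x) + \<Theta> (TT z x) * x $ k) has_derivative
     (\<lambda>h. (A * fst (L h) + B * fst (snd (L h)) + C * snd (snd (L h))) +
        (\<Theta> (TT z w) * h $ k + (A' * fst (L h) + B' * fst (snd (L h)) + C' * snd (snd (L h))) * w $ k))) (at w)"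
    by (rule has_derivative_add[OF c1 has_derivative_mult[OF c2 hd_nth]])
  note D = dz_gen[OF U f g]
  show "dz j f w = A * cX z w ^ 2 * cnj (z $ j) + C * cnj (w $ j)
          + (A' * cX z w ^ 2 * cnj (z $ j) + C' * cnj (w $ j)) * w $ k
          + (if j = k then \<Theta> (TT z w) else 0)"
    by (subst D; simp add: L_def cinner_axis1 cinner_axis2 axis_nth_eq field_simps)
  show "dzb j f w = B * cY z w ^ 2 * z $ j + C * w $ j
          + (B' * cY z w ^ 2 * z $ j + C' * w $ j) * w $ k"
    by (subst D; simp add: L_def cinner_axis1 cinner_axis2 axis_nth_eq field_simps)
qed

lemma dz_comp0:
  fixes z :: "complex^'n::finite"
  assumes U: "open U" "w \<in> U" and good: "cinner w z \<noteq> 1" "cinner z w \<noteq> 1"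
  and f: "\<And>x. x \<in> U \<Longrightarrow> f x = \<Psi> (TT z x)"
  and dP: "(\<Psi> has_derivative (\<lambda>h. A * fst h + B * fst (snd h) + C * snd (snd h))) (at (TT z w))"
  shows "dz j f w = A * cX z w ^ 2 * cnj (z $ j) + C * cnj (w $ j)"
    and "dzb j f w = B * cY z w ^ 2 * z $ j + C * w $ j"
proof -
  have f': "\<And>x. x \<in> U \<Longrightarrow> f x = \<Psi> (TT z x) + (\<lambda>_. 0) (TT z x) * x $ j" using f by simp
  have d0: "((\<lambda>_. 0::complex) has_derivative (\<lambda>h. 0 * fst h + 0 * fst (snd h) + 0 * snd (snd h))) (at (TT z w))"
    by (simp add: has_derivative_const)
  show "dz j f w = A * cX z w ^ 2 * cnj (z $ j) + C * cnj (w $ j)"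
    "dzb j f w = B * cY z w ^ 2 * z $ j + C * w $ j"
    using dz_comp[OF U good f' dP d0, of j] by simp_all
qed

lemma inv_id: "(a::complex) \<noteq> 1 \<Longrightarrow> (1 / (1 - a)) ^ 2 * a = (1 / (1 - a)) ^ 2 - 1 / (1 - a)"
proof -
  assume "a \<noteq> 1"
  then have h: "1 - a \<noteq> 0" by simp
  have "\<And>b::complex. b \<noteq> 0 \<Longrightarrow> (1 / b) ^ 2 * (1 - b) = (1 / b) ^ 2 - 1 / b"
    by (simp add: power2_eq_square divide_simps)
  from this[OF h] show ?thesis by simp
qed
lemma X_id: "cinner w z \<noteq> 1 \<Longrightarrow> cX z w ^ 2 * cinner w z = cX z w ^ 2 - cX z w"
  unfolding cX_def by (rule inv_id)
lemma Y_id: "cinner z w \<noteq> 1 \<Longrightarrow> cY z w ^ 2 * cinner z w = cY z w ^ 2 - cY z w"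
  unfolding cY_def by (rule inv_id)

lemma Ebop_T:
  fixes z :: "complex^'n::finite"
  assumes U: "open U" "w \<in> U" and good: "cinner w z \<noteq> 1" "cinner z w \<noteq> 1"
  and f: "\<And>x. x \<in> U \<Longrightarrow> f x = \<Psi> (TT z x)"
  and dP: "(\<Psi> has_derivative (\<lambda>h. A * fst h + B * fst (snd h) + C * snd (snd h))) (at (TT z w))"
  shows "Ebop f w = B * (cY z w ^ 2 - cY z w) + C * cinner w w"
    and "Eop f w = A * (cX z w ^ 2 - cX z w) + C * cinner w w"
proof -
  note D = dz_comp0[OF U good f dP]
  have "Ebop f w = B * (cY z w ^ 2 * cinner z w) + C * cinner w w"
    unfolding Ebop_def cinner_def by (simp add: D sum_distrib_left sum.distrib algebra_simps)
  then show "Ebop f w = B * (cY z w ^ 2 - cY z w) + C * cinner w w" using Y_id[OF good(2)] by simp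
  have "Eop f w = A * (cX z w ^ 2 * cinner w z) + C * cinner w w"
    unfolding Eop_def cinner_def by (simp add: D sum_distrib_left sum.distrib algebra_simps)
  then show "Eop f w = A * (cX z w ^ 2 - cX z w) + C * cinner w w" using X_id[OF good(1)] by simp
qed

definition EF :: "complex \<Rightarrow> (complex\<times>complex\<times>complex \<Rightarrow> complex) \<Rightarrow> _ \<Rightarrow> _ \<Rightarrow> _ \<Rightarrow> _ \<Rightarrow> _ \<Rightarrow> _ \<Rightarrow> _ \<Rightarrow> complex\<times>complex\<times>complex \<Rightarrow> complex" where
  "EF s0 \<Phi> Px Py Ps Pxy Pxs Pys Pss p = (let X = fst p; Y = fst (snd p); S = snd (snd p) in
      (X^2 - X) * ((Y^2 - Y) * Pxy p + S * Pxs p + s0 * Px p)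
    + S * ((Y^2 - Y) * Pys p + Ps p + S * Pss p + s0 * Ps p)
    + s0 * ((Y^2 - Y) * Py p + S * Ps p + s0 * \<Phi> p))"

definition LF :: "complex \<Rightarrow> complex \<Rightarrow> (complex\<times>complex\<times>complex \<Rightarrow> complex) \<Rightarrow> _ \<Rightarrow> _ \<Rightarrow> _ \<Rightarrow> _ \<Rightarrow> complex\<times>complex\<times>complex \<Rightarrow> complex" where
  "LF c N Ps Pxy Pxs Pys Pss p = (let X = fst p; Y = fst (snd p); S = snd (snd p) in
      c * X^2 * Y^2 * Pxy p + (Y^2 - Y) * Pys p + (X^2 - X) * Pxs p + S * Pss p + N * Ps p)"

lemma TT_simps: "fst (TT z w) = cX z w" "fst (snd (TT z w)) = cY z w" "snd (snd (TT z w)) = cinner w w"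
  by (simp_all add: TT_def)

lemma Ops_T:
  fixes z :: "complex^'n::finite" and s0 :: real
  assumes U: "open U" "w \<in> U" and good: "\<And>x. x \<in> U \<Longrightarrow> cinner x z \<noteq> 1 \<and> cinner z x \<noteq> 1"
  and f: "\<And>x. x \<in> U \<Longrightarrow> f x = \<Phi> (TT z x)"
  and d0: "\<And>x. x \<in> U \<Longrightarrow> (\<Phi> has_derivative (\<lambda>h. Px (TT z x) * fst h + Py (TT z x) * fst (snd h) + Ps (TT z x) * snd (snd h))) (at (TT z x))"
  and dy: "\<And>x. x \<in> U \<Longrightarrow> (Py has_derivative (\<lambda>h. Pxy (TT z x) * fst h + Pyy (TT z x) * fst (snd h) + Pys (TT z x) * snd (snd h))) (at (TT z x))"
  and ds: "\<And>x. x \<in> U \<Longrightarrow> (Ps has_derivative (\<lambda>h. Pxs (TT z x) * fst h + Pys2 (TT z x) * fst (snd h) + Pss (TT z x) * snd (snd h))) (at (TT z x))"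
  shows "absE2 s0 f w = EF (of_real s0) \<Phi> Px Py Ps Pxy Pxs Pys Pss (TT z w)"
    and "Lapop f w = LF (cinner z z) (of_nat CARD('n)) Ps Pxy Pxs Pys Pss (TT z w)"
proof -
  have gw: "cinner w z \<noteq> 1" "cinner z w \<noteq> 1" using good[OF U(2)] by auto
  define s where "s = complex_of_real s0"
  define \<Psi> where "\<Psi> = (\<lambda>p. Py p * (fst (snd p) ^ 2 - fst (snd p)) + Ps p * snd (snd p) + s * \<Phi> p)"
  have g: "Ebop f x + s * f x = \<Psi> (TT z x)" if "x \<in> U" for x
  proof -
    have gx: "cinner x z \<noteq> 1" "cinner z x \<noteq> 1" using good[OF that] by auto
    show ?thesis
      using Ebop_T(1)[OF U(1) that gx f d0[OF that]] f[OF that]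
      by (simp add: \<Psi>_def TT_simps)
  qed
  have dPsi: "(\<Psi> has_derivative (\<lambda>h.
      (Pxy (TT z w) * (cY z w ^ 2 - cY z w) + Pxs (TT z w) * cinner w w + s * Px (TT z w)) * fst h
    + (Pyy (TT z w) * (cY z w ^ 2 - cY z w) + Py (TT z w) * (2 * cY z w - 1) + Pys2 (TT z w) * cinner w w + s * Py (TT z w)) * fst (snd h)
    + (Pys (TT z w) * (cY z w ^ 2 - cY z w) + Pss (TT z w) * cinner w w + Ps (TT z w) + s * Ps (TT z w)) * snd (snd h)))
    (at (TT z w))"
    unfolding \<Psi>_def
    apply (rule has_derivative_eq_rhs)
     apply (rule derivative_eq_intros dy[OF U(2)] ds[OF U(2)] d0[OF U(2)] refl)+
    apply (simp add: TT_simps algebra_simps power2_eq_square)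
    done
  have "absE2 s0 f w = Eop (\<lambda>x. Ebop f x + s * f x) w + s * (Ebop f w + s * f w)"
    unfolding absE2_def Let_def s_def by simp
  also have "Eop (\<lambda>x. Ebop f x + s * f x) w =
      (Pxy (TT z w) * (cY z w ^ 2 - cY z w) + Pxs (TT z w) * cinner w w + s * Px (TT z w)) * (cX z w ^ 2 - cX z w)
     + (Pys (TT z w) * (cY z w ^ 2 - cY z w) + Pss (TT z w) * cinner w w + Ps (TT z w) + s * Ps (TT z w)) * cinner w w"
    by (rule Ebop_T(2)[OF U gw g dPsi])
  also have "Ebop f w + s * f w = \<Psi> (TT z w)" by (rule g[OF U(2)])
  finally show "absE2 s0 f w = EF (of_real s0) \<Phi> Px Py Ps Pxy Pxs Pys Pss (TT z w)"
    unfolding EF_def Let_def \<Psi>_def s_def[symmetric] by (simp add: TT_simps algebra_simps)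
  have dj: "dz j (dzb j f) w = Pxy (TT z w) * cY z w ^ 2 * z $ j * cX z w ^ 2 * cnj (z $ j)
      + Pys (TT z w) * cY z w ^ 2 * z $ j * cnj (w $ j)
      + (Pxs (TT z w) * cX z w ^ 2 * cnj (z $ j) + Pss (TT z w) * cnj (w $ j)) * w $ j + Ps (TT z w)" for j
  proof -
    define \<Psi>j where "\<Psi>j = (\<lambda>p. Py p * fst (snd p) ^ 2 * z $ j)"
    have e: "dzb j f x = \<Psi>j (TT z x) + Ps (TT z x) * x $ j" if "x \<in> U" for x
    proof -
      have gx: "cinner x z \<noteq> 1" "cinner z x \<noteq> 1" using good[OF that] by auto
      show ?thesis using dz_comp0(2)[OF U(1) that gx f d0[OF that]] by (simp add: \<Psi>j_def TT_simps)
    qed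
    have dj: "(\<Psi>j has_derivative (\<lambda>h. (Pxy (TT z w) * cY z w ^ 2 * z $ j) * fst h
        + ((Pyy (TT z w) * cY z w ^ 2 + Py (TT z w) * (2 * cY z w)) * z $ j) * fst (snd h)
        + (Pys (TT z w) * cY z w ^ 2 * z $ j) * snd (snd h))) (at (TT z w))"
      unfolding \<Psi>j_def
      apply (rule has_derivative_eq_rhs)
       apply (rule derivative_eq_intros dy[OF U(2)] refl)+
      apply (simp add: TT_simps algebra_simps power2_eq_square)
      done
    show ?thesis using dz_comp(1)[OF U gw e dj ds[OF U(2)], of j] by simp
  qed
  have "Lapop f w = Pxy (TT z w) * cX z w ^ 2 * cY z w ^ 2 * cinner z z
     + Pys (TT z w) * (cY z w ^ 2 * cinner z w) + Pxs (TT z w) * (cX z w ^ 2 * cinner w z)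
     + Pss (TT z w) * cinner w w + of_nat CARD('n) * Ps (TT z w)"
    unfolding Lapop_def dj cinner_def
    by (simp add: sum.distrib sum_distrib_left algebra_simps)
  then show "Lapop f w = LF (cinner z z) (of_nat CARD('n)) Ps Pxy Pxs Pys Pss (TT z w)"
    unfolding LF_def Let_def TT_simps X_id[OF gw(1)] Y_id[OF gw(2)] by (simp add: algebra_simps)
qed

definition Q :: "nat \<Rightarrow> complex \<Rightarrow> complex \<Rightarrow> complex \<Rightarrow> complex \<Rightarrow> complex \<Rightarrow> complex\<times>complex\<times>complex \<Rightarrow> complex" where
  "Q n a11 a10 a01 a00 b p = (let X = fst p; Y = fst (snd p); S = snd (snd p) in
     a11 * X^(n+1) * Y^(n+1) + a10 * X^(n+1) * Y^n + a01 * X^n * Y^(n+1) + a00 * X^n * Y^n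
     + b * S * X^(n+1) * Y^(n+1))"

definition Qx where "Qx n a11 a10 a01 a00 b p = (let X = fst p; Y = fst (snd p); S = snd (snd p) in
     a11 * of_nat (n+1) * X^n * Y^(n+1) + a10 * of_nat (n+1) * X^n * Y^n + a01 * of_nat n * X^(n-1) * Y^(n+1)
     + a00 * of_nat n * X^(n-1) * Y^n + b * S * of_nat (n+1) * X^n * Y^(n+1))"
definition Qy where "Qy n a11 a10 a01 a00 b p = (let X = fst p; Y = fst (snd p); S = snd (snd p) in
     a11 * of_nat (n+1) * X^(n+1) * Y^n + a10 * of_nat n * X^(n+1) * Y^(n-1) + a01 * of_nat (n+1) * X^n * Y^n
     + a00 * of_nat n * X^n * Y^(n-1) + b * S * of_nat (n+1) * X^(n+1) * Y^n)"
definition Qs where "Qs n (b::complex) p = (let X = fst p; Y = fst (snd p) in b * X^(n+1) * Y^(n+1))"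
definition Qxy where "Qxy n a11 a10 a01 a00 b p = (let X = fst p; Y = fst (snd p); S = snd (snd p) in
     a11 * of_nat (n+1) * of_nat (n+1) * X^n * Y^n + a10 * of_nat (n+1) * of_nat n * X^n * Y^(n-1)
     + a01 * of_nat n * of_nat (n+1) * X^(n-1) * Y^n
     + a00 * of_nat n * of_nat n * X^(n-1) * Y^(n-1) + b * S * of_nat (n+1) * of_nat (n+1) * X^n * Y^n)"
definition Qyy where "Qyy n a11 a10 a01 a00 b p = (let X = fst p; Y = fst (snd p); S = snd (snd p) in
     a11 * of_nat (n+1) * of_nat n * X^(n+1) * Y^(n-1) + a10 * of_nat n * of_nat (n-1) * X^(n+1) * Y^(n-1-1)
     + a01 * of_nat (n+1) * of_nat n * X^n * Y^(n-1)
     + a00 * of_nat n * of_nat (n-1) * X^n * Y^(n-1-1) + b * S * of_nat (n+1) * of_nat n * X^(n+1) * Y^(n-1))"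
definition Qxs where "Qxs n (b::complex) p = (let X = fst p; Y = fst (snd p) in b * of_nat (n+1) * X^n * Y^(n+1))"
definition Qys where "Qys n (b::complex) p = (let X = fst p; Y = fst (snd p) in b * of_nat (n+1) * X^(n+1) * Y^n)"

lemma dQ: "(Q n a11 a10 a01 a00 b has_derivative (\<lambda>h. Qx n a11 a10 a01 a00 b p * fst h + Qy n a11 a10 a01 a00 b p * fst (snd h) + Qs n b p * snd (snd h))) (at p)"
  unfolding Q_def Qx_def Qy_def Qs_def Let_def
  apply (rule has_derivative_eq_rhs)
   apply (rule derivative_eq_intros refl)+
  apply (simp add: algebra_simps)
  done

lemma dQy: "(Qy n a11 a10 a01 a00 b has_derivative (\<lambda>h. Qxy n a11 a10 a01 a00 b p * fst h + Qyy n a11 a10 a01 a00 b p * fst (snd h) + Qys n b p * snd (snd h))) (at p)"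
  unfolding Qy_def Qxy_def Qyy_def Qys_def Let_def
  apply (rule has_derivative_eq_rhs)
   apply (rule derivative_eq_intros refl)+
  apply (simp add: algebra_simps)
  done

lemma dQs: "(Qs n b has_derivative (\<lambda>h. Qxs n b p * fst h + Qys n b p * fst (snd h) + (\<lambda>_. 0) p * snd (snd h))) (at p)"
  unfolding Qs_def Qxs_def Qys_def Let_def
  apply (rule has_derivative_eq_rhs)
   apply (rule derivative_eq_intros refl)+
  apply (simp add: algebra_simps)
  done

lemma Q_step:
  fixes c N :: complex
  defines "T \<equiv> 1 - c"
  shows "EF (of_nat n) (Q n a11 a10 a01 a00 b) (Qx n a11 a10 a01 a00 b) (Qy n a11 a10 a01 a00 b) (Qs n b)
           (Qxy n a11 a10 a01 a00 b) (Qxs n b) (Qys n b) (\<lambda>_. 0) p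
       - LF c N (Qs n b) (Qxy n a11 a10 a01 a00 b) (Qxs n b) (Qys n b) (\<lambda>_. 0) p
     = Q (Suc n) (of_nat (n+1) ^ 2 * T * a11)
          (of_nat (n+1) * of_nat n * T * a10 - of_nat (n+1) * a11 - of_nat (n+1) * b)
          (of_nat (n+1) * of_nat n * T * a01 - of_nat (n+1) * a11 - of_nat (n+1) * b)
          (of_nat n ^ 2 * T * a00 - of_nat n * a10 - of_nat n * a01 + a11 - (N - 2 * of_nat n - 2) * b)
          (of_nat (n+1) ^ 2 * T * b) p"
proof (cases n)
  case 0
  then show ?thesis
    unfolding EF_def LF_def Q_def Qx_def Qy_def Qs_def Qxy_def Qxs_def Qys_def Let_def T_def
    by (simp add: algebra_simps power2_eq_square)
next
  case (Suc j)
  then show ?thesis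
    unfolding EF_def LF_def Q_def Qx_def Qy_def Qs_def Qxy_def Qxs_def Qys_def Let_def T_def
    by (simp add: algebra_simps power2_eq_square)
qed

definition Qt :: "nat \<Rightarrow> complex\<times>complex\<times>complex\<times>complex\<times>complex \<Rightarrow> complex\<times>complex\<times>complex \<Rightarrow> complex" where
  "Qt n C = (case C of (a11, a10, a01, a00, b) \<Rightarrow> Q n a11 a10 a01 a00 b)"

definition stepC :: "complex \<Rightarrow> complex \<Rightarrow> nat \<Rightarrow> complex\<times>complex\<times>complex\<times>complex\<times>complex \<Rightarrow> complex\<times>complex\<times>complex\<times>complex\<times>complex" where
  "stepC T N n C = (case C of (a11, a10, a01, a00, b) \<Rightarrow>
     (of_nat (n+1) ^ 2 * T * a11,
      of_nat (n+1) * of_nat n * T * a10 - of_nat (n+1) * a11 - of_nat (n+1) * b,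
      of_nat (n+1) * of_nat n * T * a01 - of_nat (n+1) * a11 - of_nat (n+1) * b,
      of_nat n ^ 2 * T * a00 - of_nat n * a10 - of_nat n * a01 + a11 - (N - 2 * of_nat n - 2) * b,
      of_nat (n+1) ^ 2 * T * b))"

primrec coefs :: "complex \<Rightarrow> complex \<Rightarrow> complex\<times>complex\<times>complex\<times>complex\<times>complex \<Rightarrow> nat \<Rightarrow> complex\<times>complex\<times>complex\<times>complex\<times>complex" where
  "coefs T N C0 0 = stepC T N 0 C0"
| "coefs T N C0 (Suc k) = stepC T N (Suc k) (coefs T N C0 k)"

lemma Lop_Q:
  fixes z :: "complex^'n::finite"
  assumes U: "open U" and good: "\<And>x. x \<in> U \<Longrightarrow> cinner x z \<noteq> 1 \<and> cinner z x \<noteq> 1"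
  and f: "\<And>x. x \<in> U \<Longrightarrow> f x = Qt n C (TT z x)" and w: "w \<in> U"
  shows "Lop (real n) f w = Qt (Suc n) (stepC (1 - cinner z z) (of_nat CARD('n)) n C) (TT z w)"
proof -
  obtain a11 a10 a01 a00 b where C: "C = (a11, a10, a01, a00, b)" by (cases C) auto
  have f': "\<And>x. x \<in> U \<Longrightarrow> f x = Q n a11 a10 a01 a00 b (TT z x)" using f C by (simp add: Qt_def)
  note O = Ops_T[OF U w good f' dQ dQy dQs, simplified]
  have L: "Lop (real n) f w = absE2 (real n) f w - Lapop f w" by (simp add: Lop_def)
  show ?thesis
    unfolding L O(1)[of "real n"] O(2) C Qt_def stepC_def using Q_step[of n a11 a10 a01 a00 b "TT z w" "cinner z z" "of_nat CARD('n)"]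
    by simp
qed

lemma Lprod_Q:
  fixes z :: "complex^'n::finite"
  assumes U: "open U" and good: "\<And>x. x \<in> U \<Longrightarrow> cinner x z \<noteq> 1 \<and> cinner z x \<noteq> 1"
  and f: "\<And>x. x \<in> U \<Longrightarrow> f x = Qt 0 C0 (TT z x)"
  shows "\<forall>w\<in>U. Lprod k f w = Qt (Suc k) (coefs (1 - cinner z z) (of_nat CARD('n)) C0 k) (TT z w)"
proof (induction k)
  case 0
  show ?case using Lop_Q[OF U good f, of _] by simp
next
  case (Suc k)
  show ?case
  proof
    fix w assume w: "w \<in> U"
    have "Lprod (Suc k) f w = Lop (real (Suc k)) (Lprod k f) w" by simp
    also have "\<dots> = Qt (Suc (Suc k)) (stepC (1 - cinner z z) (of_nat CARD('n)) (Suc k) (coefs (1 - cinner z z) (of_nat CARD('n)) C0 k)) (TT z w)"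
      by (rule Lop_Q[OF U good _ w]) (use Suc.IH in auto)
    finally show "Lprod (Suc k) f w = Qt (Suc (Suc k)) (coefs (1 - cinner z z) (of_nat CARD('n)) C0 (Suc k)) (TT z w)"
      by simp
  qed
qed

lemma coefs1:
  fixes T N :: complex
  assumes T: "T \<noteq> 0"
  shows "coefs T N (1,0,0,0,0) k =
     ((fact k)^2 * of_nat (k+1) * of_nat (k+1) * T^(k+1),
      - ((fact k)^2 * of_nat (k+1) * of_nat (k+1) * T^k),
      - ((fact k)^2 * of_nat (k+1) * of_nat (k+1) * T^k),
      (fact k)^2 * of_nat (k+1) * (of_nat (k+1) - 1 + T) * T^k / T, 0)"
proof (induction k)
  case 0
  then show ?case using T by (simp add: stepC_def)
next
  case (Suc k)
  show ?case unfolding coefs.simps Suc.IH stepC_def using T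
    by (simp add: field_simps power2_eq_square)
qed

lemma coefs2:
  fixes T N :: complex
  shows "coefs T N (1,0,0,0,-1) k =
     ((fact k)^2 * of_nat (k+1) * of_nat (k+1) * T^(k+1), 0, 0,
      (fact k)^2 * of_nat (k+1) * (N - of_nat (k+1)) * T^k,
      - ((fact k)^2 * of_nat (k+1) * of_nat (k+1) * T^(k+1)))"
proof (induction k)
  case 0
  then show ?case by (simp add: stepC_def)
next
  case (Suc k)
  show ?case unfolding coefs.simps Suc.IH stepC_def
    by (simp add: field_simps power2_eq_square)
qed

definition Gf :: "nat \<Rightarrow> complex \<Rightarrow> complex\<times>complex\<times>complex \<Rightarrow> complex" where "Gf n M p = (let X = fst p; Y = fst (snd p); S = snd (snd p) in M * (1 - S)^n * X^n * Y^n)"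
definition Gx :: "nat \<Rightarrow> complex \<Rightarrow> complex\<times>complex\<times>complex \<Rightarrow> complex" where "Gx n M p = (let X = fst p; Y = fst (snd p); S = snd (snd p) in M * (1 - S)^n * (of_nat n * X^(n-1)) * Y^n)"
definition Gy :: "nat \<Rightarrow> complex \<Rightarrow> complex\<times>complex\<times>complex \<Rightarrow> complex" where "Gy n M p = (let X = fst p; Y = fst (snd p); S = snd (snd p) in M * (1 - S)^n * X^n * (of_nat n * Y^(n-1)))"
definition Gs :: "nat \<Rightarrow> complex \<Rightarrow> complex\<times>complex\<times>complex \<Rightarrow> complex" where "Gs n M p = (let X = fst p; Y = fst (snd p); S = snd (snd p) in - (M * of_nat n * (1 - S)^(n-1) * X^n * Y^n))"
definition Gxy :: "nat \<Rightarrow> complex \<Rightarrow> complex\<times>complex\<times>complex \<Rightarrow> complex" where "Gxy n M p = (let X = fst p; Y = fst (snd p); S = snd (snd p) in M * (1 - S)^n * (of_nat n * X^(n-1)) * (of_nat n * Y^(n-1)))"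
definition Gyy :: "nat \<Rightarrow> complex \<Rightarrow> complex\<times>complex\<times>complex \<Rightarrow> complex" where "Gyy n M p = (let X = fst p; Y = fst (snd p); S = snd (snd p) in M * (1 - S)^n * X^n * (of_nat n * of_nat (n-1) * Y^(n-1-1)))"
definition Gys :: "nat \<Rightarrow> complex \<Rightarrow> complex\<times>complex\<times>complex \<Rightarrow> complex" where "Gys n M p = (let X = fst p; Y = fst (snd p); S = snd (snd p) in - (M * of_nat n * (1 - S)^(n-1) * X^n * (of_nat n * Y^(n-1))))"
definition Gxs :: "nat \<Rightarrow> complex \<Rightarrow> complex\<times>complex\<times>complex \<Rightarrow> complex" where "Gxs n M p = (let X = fst p; Y = fst (snd p); S = snd (snd p) in - (M * of_nat n * (1 - S)^(n-1) * (of_nat n * X^(n-1)) * Y^n))"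
definition Gss :: "nat \<Rightarrow> complex \<Rightarrow> complex\<times>complex\<times>complex \<Rightarrow> complex" where "Gss n M p = (let X = fst p; Y = fst (snd p); S = snd (snd p) in M * of_nat n * of_nat (n-1) * (1 - S)^(n-1-1) * X^n * Y^n)"

lemma dG: "(Gf n M has_derivative (\<lambda>h. Gx n M p * fst h + Gy n M p * fst (snd h) + Gs n M p * snd (snd h))) (at p)"
  unfolding Gf_def Gx_def Gy_def Gs_def Let_def
  apply (rule has_derivative_eq_rhs)
   apply (rule derivative_eq_intros refl)+
  apply (simp add: algebra_simps)
  done

lemma dGy: "(Gy n M has_derivative (\<lambda>h. Gxy n M p * fst h + Gyy n M p * fst (snd h) + Gys n M p * snd (snd h))) (at p)"
  unfolding Gy_def Gxy_def Gyy_def Gys_def Let_def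
  apply (rule has_derivative_eq_rhs)
   apply (rule derivative_eq_intros refl)+
  apply (simp add: algebra_simps)
  done

lemma dGs: "(Gs n M has_derivative (\<lambda>h. Gxs n M p * fst h + Gys n M p * fst (snd h) + Gss n M p * snd (snd h))) (at p)"
  unfolding Gs_def Gxs_def Gys_def Gss_def Let_def
  apply (rule has_derivative_eq_rhs)
   apply (rule derivative_eq_intros refl)+
  apply (simp add: algebra_simps)
  done

lemma G_id1:
  fixes X Y c S :: complex
  assumes T: "1 - c \<noteq> 0"
  shows "EF 0 (Gf (Suc (Suc j)) ((fact (Suc j))^2)) (Gx (Suc (Suc j)) ((fact (Suc j))^2)) (Gy (Suc (Suc j)) ((fact (Suc j))^2))
     (Gs (Suc (Suc j)) ((fact (Suc j))^2)) (Gxy (Suc (Suc j)) ((fact (Suc j))^2)) (Gxs (Suc (Suc j)) ((fact (Suc j))^2))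
     (Gys (Suc (Suc j)) ((fact (Suc j))^2)) (Gss (Suc (Suc j)) ((fact (Suc j))^2)) (Y, X, c)
   = Qt (Suc (Suc j)) (coefs (1 - c) N (1,0,0,0,0) (Suc j)) (X, Y, S)"
  unfolding coefs1[OF T] Qt_def Q_def EF_def Gf_def Gx_def Gy_def Gs_def Gxy_def Gxs_def Gys_def Gss_def Let_def
  using T by (simp add: field_simps power2_eq_square)

lemma G_id2:
  fixes X Y c S N :: complex
  shows "EF 0 (Gf (Suc (Suc j)) ((fact (Suc j))^2)) (Gx (Suc (Suc j)) ((fact (Suc j))^2)) (Gy (Suc (Suc j)) ((fact (Suc j))^2))
     (Gs (Suc (Suc j)) ((fact (Suc j))^2)) (Gxy (Suc (Suc j)) ((fact (Suc j))^2)) (Gxs (Suc (Suc j)) ((fact (Suc j))^2))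
     (Gys (Suc (Suc j)) ((fact (Suc j))^2)) (Gss (Suc (Suc j)) ((fact (Suc j))^2)) (Y, X, c)
   - LF S N (Gs (Suc (Suc j)) ((fact (Suc j))^2)) (Gxy (Suc (Suc j)) ((fact (Suc j))^2)) (Gxs (Suc (Suc j)) ((fact (Suc j))^2))
     (Gys (Suc (Suc j)) ((fact (Suc j))^2)) (Gss (Suc (Suc j)) ((fact (Suc j))^2)) (Y, X, c)
   = Qt (Suc (Suc j)) (coefs (1 - c) N (1,0,0,0,-1) (Suc j)) (X, Y, S)"
  unfolding coefs2 Qt_def Q_def EF_def LF_def Gf_def Gx_def Gy_def Gs_def Gxy_def Gxs_def Gys_def Gss_def Let_def
  by (simp add: field_simps power2_eq_square)

lemma cinner_cnj: "cnj (cinner z w) = cinner w z"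
  unfolding cinner_def by (simp add: mult.commute)

lemma norm_sq_cinner: "complex_of_real ((norm (w::complex^'n::finite))^2) = cinner w w"
proof -
  have h: "(norm w)^2 = (\<Sum>i\<in>UNIV. (cmod (w $ i))^2)"
    unfolding norm_vec_def L2_set_def by (simp add: sum_nonneg)
  show ?thesis unfolding cinner_def by (simp only: h of_real_sum complex_norm_square)
qed

lemma cinner_CS: "cmod (cinner (x::complex^'n::finite) z) \<le> norm x * norm z"
proof -
  have "cmod (cinner x z) \<le> (\<Sum>i\<in>UNIV. \<bar>cmod (x $ i)\<bar> * \<bar>cmod (z $ i)\<bar>)"
    unfolding cinner_def by (rule order_trans[OF norm_sum]) (simp add: norm_mult)
  also have "\<dots> \<le> L2_set (\<lambda>i. cmod (x $ i)) UNIV * L2_set (\<lambda>i. cmod (z $ i)) UNIV"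
    by (rule L2_set_mult_ineq)
  finally show ?thesis unfolding norm_vec_def .
qed

lemma good_ball:
  fixes z :: "complex^'n::finite"
  assumes "norm z < 1" "x \<in> ball 0 1"
  shows "cinner x z \<noteq> 1 \<and> cinner z x \<noteq> 1"
proof -
  have x: "norm x < 1" using assms(2) by simp
  have "cmod (cinner x z) \<le> norm x * norm z" by (rule cinner_CS)
  also have "\<dots> < 1" using x assms(1) by (metis mult_strict_mono' norm_ge_zero mult_1_left)
  finally have a: "cmod (cinner x z) < 1" .
  have b: "cmod (cinner z x) < 1" using a cinner_cnj[of x z] by (metis complex_mod_cnj)
  show ?thesis using a b by auto
qed

lemma cmod_sq: "complex_of_real ((cmod (1 - cinner z w))^2) = (1 - cinner z w) * (1 - cinner w z)"
  using complex_norm_square[of "1 - cinner z w"] cinner_cnj[of z w] by simp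

theorem lemma2p1:
  fixes m :: nat and z \<xi> :: "complex^'n::finite"
  assumes "m \<ge> 1" and "norm z < 1" and "norm \<xi> < 1"
  shows "Lprod m (\<lambda>w. complex_of_real (1 / (cmod (1 - cinner z w))\<^sup>2)) \<xi>
           = absE2 0 (\<lambda>w. complex_of_real ((fact m)\<^sup>2 * (1 - (norm w)\<^sup>2) ^ (m + 1)
                         / cmod (1 - cinner w \<xi>) ^ (2 * (m + 1)))) z
       \<and> Lprod m (\<lambda>w. complex_of_real ((1 - (norm w)\<^sup>2) / (cmod (1 - cinner z w))\<^sup>2)) \<xi>
           = Lop 0 (\<lambda>w. complex_of_real ((fact m)\<^sup>2 * (1 - (norm w)\<^sup>2) ^ (m + 1)
                         / cmod (1 - cinner w \<xi>) ^ (2 * (m + 1)))) z"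
proof -
  obtain j where m: "m = Suc j" using assms(1) by (cases m) auto
  define U :: "(complex^'n) set" where "U = ball 0 1"
  have U: "open U" unfolding U_def by simp
  have zU: "z \<in> U" and xU: "\<xi> \<in> U" using assms unfolding U_def by auto
  have goodz: "\<And>x. x \<in> U \<Longrightarrow> cinner x z \<noteq> 1 \<and> cinner z x \<noteq> 1"
    unfolding U_def using good_ball[OF assms(2)] by blast
  have goodx: "\<And>x. x \<in> U \<Longrightarrow> cinner x \<xi> \<noteq> 1 \<and> cinner \<xi> x \<noteq> 1"
    unfolding U_def using good_ball[OF assms(3)] by blast
  define N :: complex where "N = of_nat CARD('n)"
  define c where "c = cinner z z"
  have cT: "1 - c \<noteq> 0"
  proof
    assume "1 - c = 0"
    then have "complex_of_real ((norm z)^2) = 1" unfolding c_def norm_sq_cinner by simp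
    then have "(norm z)^2 = 1" by (metis of_real_eq_1_iff)
    moreover have "(norm z)^2 < 1^2" by (rule power_strict_mono) (use assms(2) in auto)
    ultimately show False by simp
  qed
  define f1 where "f1 = (\<lambda>w. complex_of_real (1 / (cmod (1 - cinner z w))\<^sup>2))"
  define f2 where "f2 = (\<lambda>w. complex_of_real ((1 - (norm w)\<^sup>2) / (cmod (1 - cinner z w))\<^sup>2))"
  define G where "G = (\<lambda>w. complex_of_real ((fact m)\<^sup>2 * (1 - (norm w)\<^sup>2) ^ (m + 1)
                         / cmod (1 - cinner w \<xi>) ^ (2 * (m + 1))))"
  have f1Q: "f1 x = Qt 0 (1,0,0,0,0) (TT z x)" if "x \<in> U" for x
  proof -
    have "f1 x = 1 / ((1 - cinner z x) * (1 - cinner x z))"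
      unfolding f1_def by (simp only: of_real_divide of_real_1 cmod_sq)
    then show ?thesis unfolding Qt_def Q_def TT_def cX_def cY_def Let_def
      by (simp add: field_simps)
  qed
  have f2Q: "f2 x = Qt 0 (1,0,0,0,-1) (TT z x)" if "x \<in> U" for x
  proof -
    have "f2 x = (1 - cinner x x) / ((1 - cinner z x) * (1 - cinner x z))"
      unfolding f2_def by (simp add: cmod_sq[symmetric] norm_sq_cinner[symmetric])
    moreover have "Qt 0 (1,0,0,0,-1) (TT z x) = (1 - cinner x x) * (cX z x * cY z x)"
      unfolding Qt_def Q_def TT_def Let_def by (simp add: left_diff_distrib)
    moreover have "(1 - cinner x x) / ((1 - cinner z x) * (1 - cinner x z)) = (1 - cinner x x) * (cX z x * cY z x)"
      unfolding cX_def cY_def by (simp add: divide_inverse mult.commute mult.left_commute)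
    ultimately show ?thesis by simp
  qed
  have GQ: "G x = Gf (Suc m) ((fact m)^2) (TT \<xi> x)" if "x \<in> U" for x
  proof -
    have "G x = (fact m)^2 * (1 - cinner x x) ^ (m + 1) / ((1 - cinner x \<xi>) * (1 - cinner \<xi> x)) ^ (m + 1)"
    proof -
      have h1: "complex_of_real ((1 - (norm x)^2)^(m + 1)) = (1 - cinner x x) ^ (m + 1)"
        by (simp only: of_real_power[of "1 - (norm x)^2"] of_real_diff of_real_1 norm_sq_cinner)
      have h2: "complex_of_real (cmod (1 - cinner x \<xi>) ^ (2 * (m + 1))) = ((1 - cinner x \<xi>) * (1 - cinner \<xi> x)) ^ (m + 1)"
        by (simp only: power_mult of_real_power[of "cmod (1 - cinner x \<xi>) ^ 2"] cmod_sq)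
      have h3: "complex_of_real ((fact m)^2) = (fact m)^2"
        by (simp only: of_real_power of_real_fact)
      show ?thesis unfolding G_def of_real_divide of_real_mult h3 h2 h1 ..
    qed
    moreover have "(fact m)^2 * (1 - cinner x x) ^ (m + 1) / ((1 - cinner x \<xi>) * (1 - cinner \<xi> x)) ^ (m + 1)
       = (fact m)^2 * (1 - cinner x x) ^ (m + 1) * (1 / (1 - cinner x \<xi>)) ^ (m + 1) * (1 / (1 - cinner \<xi> x)) ^ (m + 1)"
      by (simp add: power_mult_distrib divide_inverse power_inverse mult.assoc)
    ultimately show ?thesis unfolding Gf_def TT_def cX_def cY_def Let_def by simp
  qed
  have L1: "Lprod m f1 \<xi> = Qt (Suc m) (coefs (1 - c) N (1,0,0,0,0) m) (TT z \<xi>)"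
    using Lprod_Q[OF U goodz f1Q] xU unfolding N_def c_def by blast
  have L2: "Lprod m f2 \<xi> = Qt (Suc m) (coefs (1 - c) N (1,0,0,0,-1) m) (TT z \<xi>)"
    using Lprod_Q[OF U goodz f2Q] xU unfolding N_def c_def by blast
  note O = Ops_T[OF U zU goodx GQ dG dGy dGs, simplified]
  have TTs: "TT \<xi> z = (cY z \<xi>, cX z \<xi>, c)" "TT z \<xi> = (cX z \<xi>, cY z \<xi>, cinner \<xi> \<xi>)"
    unfolding TT_def cX_def cY_def c_def by simp_all
  have R1: "absE2 0 G z = Qt (Suc m) (coefs (1 - c) N (1,0,0,0,0) m) (TT z \<xi>)"
    using O(1)[of 0] G_id1[OF cT, of j "cY z \<xi>" "cX z \<xi>" N "cinner \<xi> \<xi>"] unfolding TTs m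
    by simp
  have R2: "Lop 0 G z = Qt (Suc m) (coefs (1 - c) N (1,0,0,0,-1) m) (TT z \<xi>)"
    using O(1)[of 0] O(2) G_id2[of j "cY z \<xi>" "cX z \<xi>" c "cinner \<xi> \<xi>" N] unfolding TTs m Lop_def N_def
    by simp
  show ?thesis using L1 L2 R1 R2 unfolding f1_def f2_def G_def by simp
qed

end
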